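(* Let $\varepsilon>0$, $0<\kappa<1$, and $M\ge0$. Let $\{a_n\}_{n=1}^\infty$ and $\{b_n\}_{n=1}^\infty$ be sequences of positive integers such that $\{a_n\}$ is non-decreasing and $\limsup_{n\to\infty}a_n^{(M+2)^{-n}}=\infty$. Suppose that for all sufficiently large $n$, $a_n\ge n^{1+\varepsilon}$ and $b_n\le 2^{(\log_2 a_n)^\kappa}$. Then for any fixed $0<c<1$, \[\liminf_{N\to\infty}2^{N^2(\log_2 a_{N-1})^c}\Big(\prod_{n=1}^{N-1}a_n\Big)^{M+1}\sum_{n=N}^\infty\Big|\frac{b_n}{a_n}\Big|=0.\] *)

theory Defs
  imports "HOL-Analysis.Analysis"
begin

end

theory Submission
  imports Defs "HOL-Real_Asymp.Real_Asymp"
begin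


lemma sum_exp_poly:
  fixes k :: real assumes "k > 0"
  shows "summable (\<lambda>n. real n ^ 2 * exp (- k * real n))"
proof (rule summable_comparison_test_bigo)
  show "summable (\<lambda>n. norm (real n powr (-2)))"
    using summable_real_powr_iff[of "-2"] by simp
  show "(\<lambda>n. real n ^ 2 * exp (- k * real n)) \<in> O(\<lambda>n. real n powr (-2))"
    using assms by real_asymp
qed

lemma lim_exp_poly:
  fixes k :: real assumes "k > 0"
  shows "(\<lambda>n. real n ^ 2 * exp (- k * real n)) \<longlonglongrightarrow> 0"
  using assms by real_asymp

lemma sum_exp:
  fixes k :: real assumes "k > 0"
  shows "summable (\<lambda>n. exp (- k * real n))"
proof (rule summable_comparison_test')
  show "summable (\<lambda>n. real n ^ 2 * exp (- k * real n))" by (rule sum_exp_poly[OF assms])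
  show "norm (exp (- k * real n)) \<le> real n ^ 2 * exp (- k * real n)" if "n \<ge> 1" for n
  proof -
    have "1 \<le> real n ^ 2" using that by simp
    then show ?thesis by simp
  qed
qed

lemma sublin:
  fixes x y e :: real assumes "x \<ge> 0" "y > 0" "0 < e" "e < 1"
  shows "x powr e \<le> x * y powr (e - 1) + y powr e"
proof (cases "x \<le> y")
  case True
  then have "x powr e \<le> y powr e" using assms by (simp add: powr_mono2)
  moreover have "x * y powr (e - 1) \<ge> 0" using assms by simp
  ultimately show ?thesis by linarith
next
  case False
  then have xp: "x > 0" using assms by simp
  have "x powr e = x * x powr (e - 1)" using xp by (simp add: powr_diff)
  also have "\<dots> \<le> x * y powr (e - 1)"
    using False assms xp by (intro mult_left_mono powr_mono2') auto
  finally show ?thesis using assms by (smt (verit) powr_ge_zero)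
qed

lemma pow2_sq: "n \<ge> 4 \<Longrightarrow> (n::nat) ^ 2 \<le> 2 ^ n"
proof (induction n rule: dec_induct)
  case base then show ?case by simp
next
  case (step k)
  have "(Suc k)^2 = k^2 + 2*k + 1" by (simp add: power2_eq_square)
  also have "\<dots> \<le> 2 * k^2"
  proof -
    have "4 * k \<le> k * k" using step(1) by simp
    then show ?thesis using step(1) unfolding power2_eq_square by linarith
  qed
  also have "\<dots> \<le> 2 * 2^k" using step by simp
  finally show ?case by simp
qed

lemma ell_bound:
  fixes L \<theta> :: real and l :: nat
  assumes "L \<ge> 2" "\<theta> > 0" "l \<ge> 4" "real l \<ge> 16 / \<theta>^2"
  shows "8 * real l * L \<le> \<theta>^2 * L ^ l"
proof -
  have l1: "l = Suc (l - 1)" using assms by simp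
  have "real l ^ 2 \<le> 2 ^ l" using pow2_sq[OF assms(3)] by (metis of_nat_le_iff of_nat_numeral of_nat_power)
  have "(2::real) ^ (l - 1) \<le> L ^ (l - 1)" using assms by (intro power_mono) auto
  have e2: "(2::real) ^ l = 2 * 2 ^ (l - 1)" by (subst l1) simp
  have eL: "L ^ l = L * L ^ (l - 1)" by (subst l1) simp
  have "8 * real l \<le> \<theta>^2 * (real l ^ 2 / 2)"
  proof -
    have "16 \<le> \<theta>^2 * real l" using assms(4) assms(2) by (simp add: field_simps)
    then have "16 * real l \<le> \<theta>^2 * real l * real l" using assms by (intro mult_right_mono) auto
    then show ?thesis by (simp add: power2_eq_square field_simps)
  qed
  also have "\<dots> \<le> \<theta>^2 * 2 ^ (l - 1)"
    using \<open>real l ^ 2 \<le> 2 ^ l\<close> e2 by (intro mult_left_mono) auto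
  also have "\<dots> \<le> \<theta>^2 * L ^ (l - 1)" using \<open>(2::real) ^ (l - 1) \<le> L ^ (l - 1)\<close> by (intro mult_left_mono) auto
  finally have "8 * real l * L \<le> \<theta>^2 * L ^ (l - 1) * L" using assms by (intro mult_right_mono) auto
  then show ?thesis using eL by (simp add: algebra_simps)
qed


lemma Lpow_powr:
  fixes L e :: real assumes "L > 0"
  shows "(L ^ N) powr e = exp (e * (real N * ln L))"
  using assms by (simp add: powr_def ln_realpow)

lemma Lpow_inv:
  fixes L :: real assumes "L > 0"
  shows "1 / L ^ N = exp (- ln L * real N)"
proof -
  have "L ^ N = exp (real N * ln L)" using assms by (simp add: exp_of_nat_mult)
  then show ?thesis by (simp add: exp_minus field_simps)
qed



lemma core_potential:
  fixes R r \<beta> \<gamma> :: "nat \<Rightarrow> real" and m :: "nat \<Rightarrow> nat" and big :: "nat \<Rightarrow> bool"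
    and nst :: nat and C D :: real
  assumes R0: "\<And>n. R n \<ge> 0" and b0: "\<And>n. \<beta> n \<ge> 0" and g0: "\<And>n. \<gamma> n \<ge> 0"
    and sb: "summable \<beta>" and sg: "summable \<gamma>" and C0: "C \<ge> 0"
    and rR: "\<And>n. n \<ge> nst \<Longrightarrow> r n \<le> R n"
    and small: "\<And>N. N > nst \<Longrightarrow> \<not> big N \<Longrightarrow> R N \<le> (1 + \<beta> N) * R (N - 1) + \<gamma> N"
    and bigm: "\<And>N. N > nst \<Longrightarrow> big N \<Longrightarrow> m N \<ge> N + 2"
    and bigR: "\<And>N. N > nst \<Longrightarrow> big N \<Longrightarrow> R (m N - 1) \<le> R (N - 1) + \<gamma> N"
    and bigr: "\<And>N n. N > nst \<Longrightarrow> big N \<Longrightarrow> N \<le> n \<Longrightarrow> n < m N \<Longrightarrow> r n \<le> C * R (N - 1) + D"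
  shows "\<exists>B. \<forall>n \<ge> nst. r n \<le> B"
proof -
  define U where "U n = (R nst + (\<Sum>j\<in>{nst<..n}. \<gamma> j)) * (\<Prod>j\<in>{nst<..n}. (1 + \<beta> j))" for n
  define Ub where "Ub = (R nst + suminf \<gamma>) * exp (suminf \<beta>)"
  have P1: "(\<Prod>j\<in>{nst<..n}. (1 + \<beta> j)) \<ge> 1" for n
    by (rule prod_ge_1) (use b0 in auto)
  have S0: "(\<Sum>j\<in>{nst<..n}. \<gamma> j) \<ge> 0" for n by (rule sum_nonneg) (use g0 in auto)
  have Ustep: "U n \<ge> (1 + \<beta> n) * U (n - 1) + \<gamma> n" if "n > nst" for n
  proof -
    have e: "{nst<..n} = insert n {nst<..n-1}" using that by auto
    have nn: "n \<notin> {nst<..n-1}" by auto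
    let ?S = "(\<Sum>j\<in>{nst<..n-1}. \<gamma> j)" and ?P = "(\<Prod>j\<in>{nst<..n-1}. (1 + \<beta> j))"
    have eqU: "U n = (1 + \<beta> n) * ((R nst + ?S) * ?P) + \<gamma> n * ((1 + \<beta> n) * ?P)"
      unfolding U_def e using nn by (simp add: algebra_simps)
    have "(1 + \<beta> n) * ?P \<ge> 1" using P1[of "n-1"] b0[of n]
      by (metis add_increasing2 dual_order.refl le_add_same_cancel1 mult_mono' mult_1 zero_le_one order_trans)
    then have "\<gamma> n * ((1 + \<beta> n) * ?P) \<ge> \<gamma> n" using g0[of n] by (metis mult_left_mono mult.right_neutral)
    then show ?thesis unfolding eqU by (simp add: U_def)
  qed
  have Umono: "U (n - 1) \<le> U n" if "n > nst" for n
  proof -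
    have "U (n-1) \<ge> 0" unfolding U_def using R0[of nst] S0 P1 by (meson add_nonneg_nonneg le_numeral_extra(1) order_trans zero_le_mult_iff)
    then have "U (n-1) \<le> (1 + \<beta> n) * U (n - 1) + \<gamma> n" using b0[of n] g0[of n]
      by (simp add: algebra_simps)
    then show ?thesis using Ustep[OF that] by linarith
  qed
  have Umono': "U i \<le> U j" if "nst \<le> i" "i \<le> j" for i j
    using that(2,1)
  proof (induction j rule: dec_induct)
    case base then show ?case by simp
  next
    case (step k) then show ?case using Umono[of "Suc k"] by simp
  qed
  have Ubd: "U n \<le> Ub" for n
  proof -
    have "(\<Sum>j\<in>{nst<..n}. \<gamma> j) \<le> suminf \<gamma>" by (rule sum_le_suminf) (use sg g0 in auto)
    moreover have "(\<Prod>j\<in>{nst<..n}. (1 + \<beta> j)) \<le> exp (suminf \<beta>)"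
    proof -
      have "(\<Prod>j\<in>{nst<..n}. (1 + \<beta> j)) \<le> (\<Prod>j\<in>{nst<..n}. exp (\<beta> j))"
        by (rule prod_mono) (use b0 in \<open>auto simp: add_nonneg_nonneg exp_ge_add_one_self\<close>)
      also have "\<dots> = exp (\<Sum>j\<in>{nst<..n}. \<beta> j)" by (simp add: exp_sum)
      also have "\<dots> \<le> exp (suminf \<beta>)"
        by (subst exp_le_cancel_iff, rule sum_le_suminf) (use sb b0 in auto)
      finally show ?thesis .
    qed
    ultimately show ?thesis unfolding U_def Ub_def using R0[of nst] S0 P1
      by (meson add_left_mono add_nonneg_nonneg mult_mono order_trans zero_le_one)
  qed
  have claim: "R n \<le> U n \<or> (\<exists>N. nst < N \<and> N \<le> n \<and> n < m N - 1 \<and> big N \<and> R (N-1) \<le> U (N-1))"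
    if "n \<ge> nst" for n
    using that
  proof (induction n rule: dec_induct)
    case base then show ?case by (simp add: U_def)
  next
    case (step k)
    let ?n = "Suc k"
    have nk: "?n > nst" using step by simp
    from step.IH show ?case
    proof
      assume Rk: "R k \<le> U k"
      show ?case
      proof (cases "big ?n")
        case True
        then show ?thesis using bigm[OF nk True] Rk nk by (intro disjI2 exI[of _ ?n]) auto
      next
        case False
        have "R ?n \<le> (1 + \<beta> ?n) * R k + \<gamma> ?n" using small[OF nk False] by simp
        also have "\<dots> \<le> (1 + \<beta> ?n) * U k + \<gamma> ?n"
          using Rk b0[of ?n] by (simp add: mult_left_mono)
        also have "\<dots> \<le> U ?n" using Ustep[OF nk] by simp
        finally show ?thesis by simp
      qed
    next
      assume "\<exists>N. nst < N \<and> N \<le> k \<and> k < m N - 1 \<and> big N \<and> R (N-1) \<le> U (N-1)"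
      then obtain N where N: "nst < N" "N \<le> k" "k < m N - 1" "big N" "R (N-1) \<le> U (N-1)" by blast
      show ?case
      proof (cases "?n < m N - 1")
        case True then show ?thesis using N by (intro disjI2 exI[of _ N]) auto
      next
        case False
        then have eq: "?n = m N - 1" using N by simp
        have "R ?n \<le> R (N-1) + \<gamma> N" using bigR[OF N(1) N(4)] eq by simp
        also have "\<dots> \<le> U (N-1) + \<gamma> N" using N by simp
        also have "\<dots> \<le> (1 + \<beta> N) * U (N-1) + \<gamma> N"
        proof -
          have "U (N-1) \<ge> 0" unfolding U_def using R0[of nst] S0 P1
            by (meson add_nonneg_nonneg le_numeral_extra(1) order_trans zero_le_mult_iff)
          then show ?thesis using b0[of N] by (simp add: algebra_simps)
        qed
        also have "\<dots> \<le> U N" using Ustep[OF N(1)] by simp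
        also have "\<dots> \<le> U ?n" using Umono'[of N ?n] N by simp
        finally show ?thesis by simp
      qed
    qed
  qed
  show ?thesis
  proof (intro exI[of _ "max Ub (C * Ub + D)"] allI impI)
    fix n assume n: "n \<ge> nst"
    from claim[OF n] show "r n \<le> max Ub (C * Ub + D)"
    proof
      assume "R n \<le> U n"
      then show ?thesis using rR[OF n] Ubd[of n] by linarith
    next
      assume "\<exists>N. nst < N \<and> N \<le> n \<and> n < m N - 1 \<and> big N \<and> R (N-1) \<le> U (N-1)"
      then obtain N where N: "nst < N" "N \<le> n" "n < m N - 1" "big N" "R (N-1) \<le> U (N-1)" by blast
      have "r n \<le> C * R (N-1) + D" using bigr[OF N(1) N(4) N(2)] N(3) by simp
      also have "\<dots> \<le> C * Ub + D" using N(5) Ubd[of "N-1"] C0 by (simp add: mult_left_mono)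
      finally show ?thesis by simp
    qed
  qed
qed



theorem lemma1:
  fixes \<epsilon> \<kappa> M c :: real and a b :: "nat \<Rightarrow> nat"
  assumes "\<epsilon> > 0" and "0 < \<kappa>" and "\<kappa> < 1" and "M \<ge> 0"
    and "\<And>n. n \<ge> 1 \<Longrightarrow> a n > 0" and "\<And>n. n \<ge> 1 \<Longrightarrow> b n > 0"
    and "\<And>m n. 1 \<le> m \<Longrightarrow> m \<le> n \<Longrightarrow> a m \<le> a n"
    and "limsup (\<lambda>n. ereal (real (a n) powr ((M + 2) powr (- real n)))) = \<infinity>"
    and "\<forall>\<^sub>F n in sequentially. real (a n) \<ge> real n powr (1 + \<epsilon>)"
    and "\<forall>\<^sub>F n in sequentially. real (b n) \<le> 2 powr ((log 2 (real (a n))) powr \<kappa>)"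
    and "0 < c" and "c < 1"
  shows "liminf (\<lambda>N. ennreal (2 powr (real N ^ 2 * (log 2 (real (a (N - 1)))) powr c)
            * (\<Prod>n=1..N-1. real (a n)) powr (M + 1))
          * (\<Sum>k. ennreal \<bar>real (b (N + k)) / real (a (N + k))\<bar>)) = 0"
proof (rule ccontr)
  assume contra: "\<not> ?thesis"
  note eps = assms(1) and kap = assms(2,3) and M0 = assms(4) and apos = assms(5) and bpos = assms(6)
    and amono = assms(7) and lsup = assms(8) and agrow = assms(9) and bbd = assms(10) and cc = assms(11,12)
  define L where "L = M + 2"
  have L2: "L \<ge> 2" using M0 by (simp add: L_def)
  define A where "A n = log 2 (real (a n))" for n
  define S where "S n = (\<Sum>i=1..n. A i)" for n
  define F where "F N = real N ^ 2 * A (N - 1) powr c + (M + 1) * S (N - 1)" for N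
  define t where "t n = real (b n) / real (a n)" for n
  define T where "T N = (\<Sum>k. t (N + k))" for N
  define P where "P N = 2 powr (real N ^ 2 * (log 2 (real (a (N - 1)))) powr c)
            * (\<Prod>n=1..N-1. real (a n)) powr (M + 1)" for N
  have a1: "real (a n) \<ge> 1" if "n \<ge> 1" for n using apos[OF that] by simp
  have A0: "A n \<ge> 0" if "n \<ge> 1" for n using a1[OF that] by (simp add: A_def)
  have aA: "real (a n) = 2 powr A n" if "n \<ge> 1" for n using a1[OF that] by (simp add: A_def)
  have Amono: "A m \<le> A n" if "1 \<le> m" "m \<le> n" for m n
    using amono[OF that] a1[OF that(1)] by (simp add: A_def)
  have t0: "t n \<ge> 0" for n by (simp add: t_def)
  define \<theta> where "\<theta> = \<epsilon> / (4 * (1 + \<epsilon>))"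
  have th0: "\<theta> > 0" and th1: "\<theta> < 1/4" using eps by (simp_all add: \<theta>_def field_simps)
  define q where "q = (1 - 2 * \<theta>) * (1 + \<epsilon>)"
  have "q = 1 + \<epsilon> / 2" using eps by (simp add: q_def \<theta>_def field_simps)
  then have q1: "q > 1" using eps by simp
  define X0 where "X0 = max 1 ((1/\<theta>) powr (1/(1-\<kappa>)))"
  have kapbd: "A' powr \<kappa> \<le> \<theta> * A'" if "A' \<ge> X0" for A'
  proof -
    have A1: "A' \<ge> 1" using that by (simp add: X0_def)
    have "A' powr (1-\<kappa>) \<ge> ((1/\<theta>) powr (1/(1-\<kappa>))) powr (1-\<kappa>)"
      using that kap th0 by (intro powr_mono2) (auto simp: X0_def)
    also have "((1/\<theta>) powr (1/(1-\<kappa>))) powr (1-\<kappa>) = 1/\<theta>"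
      using kap th0 by (simp add: powr_powr)
    finally have h: "1/\<theta> \<le> A' powr (1-\<kappa>)" .
    have "A' powr \<kappa> * (1/\<theta>) \<le> A' powr \<kappa> * A' powr (1-\<kappa>)"
      using h by (intro mult_left_mono) auto
    also have "\<dots> = A'" using A1 by (simp add: powr_add[symmetric])
    finally show ?thesis using th0 by (simp add: field_simps)
  qed
  have lim_log: "filterlim (\<lambda>n. (1 + \<epsilon>) * log 2 (real n)) at_top sequentially"
    using eps by real_asymp
  have Alog: "\<forall>\<^sub>F n in sequentially. A n \<ge> (1 + \<epsilon>) * log 2 (real n)"
    using agrow eventually_ge_at_top[of 1]
  proof eventually_elim
    case (elim n)
    have "log 2 (real n powr (1 + \<epsilon>)) \<le> log 2 (real (a n))"
      using elim apos[of n] by (subst log_le_cancel_iff) auto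
    then show ?case using elim by (simp add: A_def log_powr)
  qed
  have Abig: "\<forall>\<^sub>F n in sequentially. A n \<ge> X" for X
  proof -
    have "\<forall>\<^sub>F n in sequentially. X \<le> (1 + \<epsilon>) * log 2 (real n)"
      using lim_log by (simp add: filterlim_at_top)
    then show ?thesis using Alog by eventually_elim auto
  qed
  obtain n2 where n2: "\<And>n. n \<ge> n2 \<Longrightarrow> n \<ge> 2 \<and> A n \<ge> (1 + \<epsilon>) * log 2 (real n)
      \<and> real (b n) \<le> 2 powr (A n powr \<kappa>) \<and> A n \<ge> X0 \<and> A n \<ge> 1"
  proof -
    have "\<forall>\<^sub>F n in sequentially. n \<ge> 2 \<and> A n \<ge> (1 + \<epsilon>) * log 2 (real n)
      \<and> real (b n) \<le> 2 powr (A n powr \<kappa>) \<and> A n \<ge> X0 \<and> A n \<ge> 1"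
      using eventually_ge_at_top[of 2] Alog bbd Abig[of X0] Abig[of 1]
      by eventually_elim (auto simp: A_def)
    then show ?thesis using that by (auto simp: eventually_sequentially)
  qed
  have pw: "2 powr (- q * log 2 (real n)) = real n powr (-q)" if "n \<ge> 1" for n
  proof -
    have "real n powr (-q) = (2 powr (log 2 (real n))) powr (-q)" using that by simp
    also have "\<dots> = 2 powr (log 2 (real n) * (-q))" by (rule powr_powr)
    finally show ?thesis by (simp add: mult.commute)
  qed
  have tbd: "t n \<le> 2 powr (- \<theta> * A n) * real n powr (-q)" if "n \<ge> n2" for n
  proof -
    note nn = n2[OF that]
    have n1: "n \<ge> 1" using nn by simp
    have "t n \<le> 2 powr (A n powr \<kappa>) / 2 powr A n"
      unfolding t_def using nn aA[OF n1] by (metis divide_right_mono powr_ge_zero)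
    also have "\<dots> = 2 powr (A n powr \<kappa> - A n)" by (simp add: powr_diff)
    also have "\<dots> \<le> 2 powr (\<theta> * A n - A n)" using kapbd[of "A n"] nn by simp
    also have "\<theta> * A n - A n = - \<theta> * A n + (- (1 - 2 * \<theta>) * A n)" by (simp add: algebra_simps)
    also have "2 powr \<dots> = 2 powr (- \<theta> * A n) * 2 powr (- (1 - 2 * \<theta>) * A n)" by (rule powr_add)
    also have "2 powr (- (1 - 2 * \<theta>) * A n) \<le> 2 powr (- q * log 2 (real n))"
    proof -
      have "(1 - 2 * \<theta>) * ((1 + \<epsilon>) * log 2 (real n)) \<le> (1 - 2 * \<theta>) * A n"
        using nn th1 by (intro mult_left_mono) auto
      then show ?thesis by (simp add: q_def algebra_simps)
    qed
    finally show ?thesis using pw[OF n1] by (simp add: mult_left_mono)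
  qed
  have sumZ: "summable (\<lambda>n. real n powr (-q))"
    using summable_real_powr_iff[of "-q"] q1 by simp
  define Z where "Z = (\<Sum>n. real n powr (-q))"
  have Z1: "Z \<ge> 1"
  proof -
    have "(\<Sum>n\<in>{1}. real n powr (-q)) \<le> Z" unfolding Z_def
      by (rule sum_le_suminf[OF sumZ]) auto
    then show ?thesis by simp
  qed
  have tle: "t n \<le> real n powr (-q)" if "n \<ge> n2" for n
  proof -
    have "2 powr (- \<theta> * A n) \<le> 2 powr 0" using th0 n2[OF that] by (intro powr_mono) auto
    then have "2 powr (- \<theta> * A n) \<le> 1" by simp
    then have "2 powr (- \<theta> * A n) * real n powr (-q) \<le> 1 * real n powr (-q)"
      by (intro mult_right_mono) auto
    then show ?thesis using tbd[OF that] by simp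
  qed
  have sumt: "summable t"
    by (rule summable_comparison_test'[OF sumZ, of n2]) (use tle t0 in auto)
  have sumtN: "summable (\<lambda>k. t (N + k))" for N
    using sumt summable_iff_shift[of t N] by (simp add: add.commute)
  have T0: "T N \<ge> 0" for N unfolding T_def by (rule suminf_nonneg[OF sumtN]) (use t0 in auto)
  have Tbd1: "T N \<le> 2 powr (- \<theta> * A N) * Z" if "N \<ge> n2" for N
  proof -
    have sq: "summable (\<lambda>k. real (k + N) powr (-q))"
      using sumZ summable_iff_shift[of "\<lambda>n. real n powr (-q)" N] by simp
    have "T N \<le> (\<Sum>k. 2 powr (- \<theta> * A N) * real (k + N) powr (-q))"
      unfolding T_def
    proof (rule suminf_le[OF _ sumtN summable_mult[OF sq]])
      fix k
      have "t (N + k) \<le> 2 powr (- \<theta> * A (N + k)) * real (N + k) powr (-q)"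
        using tbd[of "N+k"] that by simp
      also have "\<dots> \<le> 2 powr (- \<theta> * A N) * real (N + k) powr (-q)"
        using Amono[of N "N+k"] n2[OF that] th0 by (intro mult_right_mono) auto
      finally show "t (N + k) \<le> 2 powr (- \<theta> * A N) * real (k + N) powr (-q)" by (simp add: add.commute)
    qed
    also have "\<dots> = 2 powr (- \<theta> * A N) * (\<Sum>k. real (k + N) powr (-q))"
      by (rule suminf_mult[OF sq])
    also have "(\<Sum>k. real (k + N) powr (-q)) \<le> Z"
    proof -
      have "(\<Sum>k. real (k + N) powr (-q)) = Z - (\<Sum>i<N. real i powr (-q))"
        unfolding Z_def by (rule suminf_minus_initial_segment[OF sumZ])
      moreover have "(\<Sum>i<N. real i powr (-q)) \<ge> 0" by (rule sum_nonneg) auto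
      ultimately show ?thesis by simp
    qed
    finally show ?thesis by (simp add: mult_left_mono)
  qed
  have Tsplit: "T N = (\<Sum>i<l. t (N + i)) + T (N + l)" for N l
  proof -
    have "T N = (\<Sum>k. t (N + (k + l))) + (\<Sum>i<l. t (N + i))"
      unfolding T_def by (rule suminf_split_initial_segment[OF sumtN])
    then show ?thesis unfolding T_def by (simp add: add_ac)
  qed
  have PF: "P N = 2 powr F N" if "N \<ge> 2" for N
  proof -
    have "(\<Prod>n=1..N-1. real (a n)) = (\<Prod>n=1..N-1. 2 powr A n)"
      by (rule prod.cong) (auto simp: aA)
    also have "\<dots> = 2 powr S (N - 1)" unfolding S_def by (simp add: powr_sum)
    finally have "(\<Prod>n=1..N-1. real (a n)) powr (M + 1) = 2 powr (S (N - 1) * (M + 1))"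
      by (simp add: powr_powr)
    then show ?thesis unfolding P_def F_def A_def by (simp add: powr_add[symmetric] algebra_simps)
  qed
  have Xeq: "(\<lambda>N. ennreal (2 powr (real N ^ 2 * (log 2 (real (a (N - 1)))) powr c)
            * (\<Prod>n=1..N-1. real (a n)) powr (M + 1))
          * (\<Sum>k. ennreal \<bar>real (b (N + k)) / real (a (N + k))\<bar>)) = (\<lambda>N. ennreal (P N * T N))"
  proof
    fix N
    have "(\<Sum>k. ennreal \<bar>real (b (N + k)) / real (a (N + k))\<bar>) = (\<Sum>k. ennreal (t (N + k)))"
      by (simp add: t_def)
    also have "\<dots> = ennreal (T N)" unfolding T_def by (rule suminf_ennreal2[OF t0 sumtN])
    finally show "ennreal (2 powr (real N ^ 2 * (log 2 (real (a (N - 1)))) powr c)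
            * (\<Prod>n=1..N-1. real (a n)) powr (M + 1))
          * (\<Sum>k. ennreal \<bar>real (b (N + k)) / real (a (N + k))\<bar>) = ennreal (P N * T N)"
      unfolding P_def[symmetric] using ennreal_mult''[OF T0[of N], of "P N"] by simp
  qed
  obtain \<delta> N0 where dpos: "\<delta> > 0" and H: "\<And>N. N \<ge> N0 \<Longrightarrow> \<delta> < 2 powr F N * T N"
  proof -
    have "liminf (\<lambda>N. ennreal (P N * T N)) \<noteq> 0" using contra Xeq by simp
    then have "0 < liminf (\<lambda>N. ennreal (P N * T N))" using not_gr_zero by blast
    then obtain y where y: "0 < y" "y < liminf (\<lambda>N. ennreal (P N * T N))" using dense by blast
    have "y < top" using order.strict_trans2[OF y(2) top_greatest] .
    then obtain d where d: "y = ennreal d" "d \<ge> 0" unfolding less_top_ennreal by auto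
    then have dp: "d > 0" using y by simp
    have "\<forall>\<^sub>F N in sequentially. ennreal d < ennreal (P N * T N)"
      using less_LiminfD[OF y(2)[unfolded d(1)]] .
    then have "\<forall>\<^sub>F N in sequentially. d < 2 powr F N * T N"
      using eventually_ge_at_top[of 2]
    proof eventually_elim
      case (elim N)
      then have "d < P N * T N" using d by (simp add: ennreal_less_iff)
      then show ?case using PF[OF elim(2)] by simp
    qed
    then show ?thesis using that dp by (auto simp: eventually_sequentially)
  qed
  define lnL where "lnL = ln L"
  have lnL0: "lnL > 0" using L2 by (simp add: lnL_def)
  have Lp: "L ^ n > 0" for n using L2 by simp
  define R where "R n = S n / L ^ n" for n
  define r where "r n = A n / L ^ n" for n
  define kc where "kc = (1 - c) * lnL"
  define kk where "kk = (1 - \<kappa>) * lnL"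
  have kc0: "kc > 0" using cc lnL0 by (simp add: kc_def)
  have kk0: "kk > 0" using kap lnL0 by (simp add: kk_def)
  define \<omega> where "\<omega> N = real N ^ 2 * exp (- kc * real N)" for N
  define \<psi> where "\<psi> N = exp (- kk * real N)" for N
  define \<iota> where "\<iota> N = exp (- lnL * real N)" for N
  have om0: "\<omega> N \<ge> 0" for N by (simp add: \<omega>_def)
  have psi0: "\<psi> N \<ge> 0" for N by (simp add: \<psi>_def)
  have io0: "\<iota> N \<ge> 0" for N by (simp add: \<iota>_def)
  have io1: "\<iota> N \<le> 1" for N using lnL0 by (simp add: \<iota>_def)
  have ioeq: "1 / L ^ N = \<iota> N" for N using Lpow_inv[of L N] L2 by (simp add: \<iota>_def lnL_def)
  have omeq: "real N ^ 2 * (L ^ N) powr (c - 1) = \<omega> N" for N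
  proof -
    have "(c - 1) * (real N * ln L) = - kc * real N" by (simp add: kc_def lnL_def algebra_simps)
    then show ?thesis using Lpow_powr[of L N "c - 1"] L2 by (simp add: \<omega>_def)
  qed
  have psieq: "(L ^ N) powr (\<kappa> - 1) = \<psi> N" for N
  proof -
    have "(\<kappa> - 1) * (real N * ln L) = - kk * real N" by (simp add: kk_def lnL_def algebra_simps)
    then show ?thesis using Lpow_powr[of L N "\<kappa> - 1"] L2 by (simp add: \<psi>_def)
  qed
  have ydiv: "(L ^ N) powr e / L ^ N = (L ^ N) powr (e - 1)" for N e
    using Lp[of N] by (simp add: powr_diff)
  have S0: "S n \<ge> 0" for n unfolding S_def by (rule sum_nonneg) (use A0 in auto)
  have R0: "R n \<ge> 0" for n using S0[of n] Lp[of n] by (simp add: R_def)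
  have SSuc: "S (Suc n) = S n + A (Suc n)" for n by (simp add: S_def)
  have AS: "A n \<le> S n" if n1: "n \<ge> 1" for n
  proof -
    obtain k where "n = Suc k" using n1 by (cases n) auto
    then show ?thesis using SSuc[of k] S0[of k] by simp
  qed
  have Sshift: "S (j + k) = S j + (\<Sum>i<k. A (j + 1 + i))" for j k
    by (induction k) (simp_all add: SSuc)
  have rR: "r n \<le> R n" if "n \<ge> 1" for n
    using AS[OF that] Lp[of n] by (simp add: r_def R_def divide_right_mono)
  have SR: "S (N - 1) / L ^ N = R (N - 1) / L" if "N \<ge> 1" for N
  proof -
    have NS: "N = Suc (N - 1)" using that by simp
    have "L ^ N = L ^ (N - 1) * L" by (subst NS) (simp add: power_Suc2)
    then show ?thesis by (simp add: R_def)
  qed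
  have sum_om: "summable \<omega>" unfolding \<omega>_def by (rule sum_exp_poly[OF kc0])
  have sum_psi: "summable \<psi>" unfolding \<psi>_def by (rule sum_exp[OF kk0])
  have sum_io: "summable \<iota>" unfolding \<iota>_def by (rule sum_exp[OF lnL0])
  obtain n3 where n3: "\<And>N. N \<ge> n3 \<Longrightarrow> \<omega> N \<le> 1"
  proof -
    have "\<forall>\<^sub>F N in sequentially. \<omega> N < 1"
      using order_tendstoD(2)[OF lim_exp_poly[OF kc0], of 1] by (simp add: \<omega>_def)
    then obtain k where "\<And>N. N \<ge> k \<Longrightarrow> \<omega> N < 1" by (auto simp: eventually_sequentially)
    then show ?thesis using that[of k] by (meson less_imp_le)
  qed
  define c1 where "c1 = \<bar>log 2 (\<delta> / Z)\<bar>"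
  have c10: "c1 \<ge> 0" by (simp add: c1_def)
  define n0 where "n0 = max N0 (max n2 n3)"
  have n0: "n0 \<ge> N0" "n0 \<ge> n2" "n0 \<ge> n3" "n0 \<ge> 2" using n2[of n2] by (auto simp: n0_def)
  have H1: "\<theta> * A N \<le> F N + c1" if "N \<ge> n0" for N
  proof -
    have "\<delta> < 2 powr F N * T N" using H[of N] that n0 by simp
    also have "\<dots> \<le> 2 powr F N * (2 powr (- \<theta> * A N) * Z)"
      using Tbd1[of N] that n0 by (intro mult_left_mono) auto
    also have "\<dots> = 2 powr (F N - \<theta> * A N) * Z"
      using powr_add[of 2 "F N" "- \<theta> * A N"] by simp
    finally have "\<delta> / Z < 2 powr (F N - \<theta> * A N)" using Z1 by (simp add: pos_divide_less_eq)
    then have "log 2 (\<delta> / Z) < log 2 (2 powr (F N - \<theta> * A N))"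
      using dpos Z1 by (subst log_less_cancel_iff) auto
    then have "log 2 (\<delta> / Z) < F N - \<theta> * A N" by simp
    then show ?thesis unfolding c1_def by linarith
  qed
  have FN: "F N / L ^ N \<le> \<omega> N * R (N - 1) + \<omega> N + (M + 1) * (S (N - 1) / L ^ N)"
    if "N \<ge> 2" for N
  proof -
    define y where "y = (L ^ N :: real)"
    have y0: "y > 0" using Lp by (simp add: y_def)
    have Ac: "A (N-1) powr c \<le> S (N-1) * y powr (c - 1) + y powr c"
    proof -
      have "A (N-1) powr c \<le> A (N-1) * y powr (c - 1) + y powr c"
        using A0[of "N-1"] that y0 cc by (intro sublin) auto
      also have "\<dots> \<le> S (N-1) * y powr (c - 1) + y powr c"
        using AS[of "N-1"] that by (intro add_right_mono mult_right_mono) auto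
      finally show ?thesis .
    qed
    have e1: "F N / y = real N ^ 2 * (A (N - 1) powr c / y) + (M + 1) * (S (N - 1) / y)"
      by (simp add: F_def add_divide_distrib)
    have e2: "A (N - 1) powr c / y \<le> y powr (c - 1) * (S (N-1) / y) + y powr (c - 1)"
    proof -
      have "A (N - 1) powr c / y \<le> (S (N-1) * y powr (c - 1) + y powr c) / y"
        using Ac y0 by (simp add: divide_right_mono)
      also have "\<dots> = y powr (c - 1) * (S (N-1) / y) + y powr (c - 1)"
        using ydiv[of N c] y0 by (simp add: y_def add_divide_distrib)
      finally show ?thesis .
    qed
    have e3: "S (N-1) / y = R (N - 1) / L" using SR[of N] that by (simp add: y_def)
    have "real N ^ 2 * (A (N - 1) powr c / y) \<le> real N ^ 2 * (y powr (c - 1) * (S (N-1) / y) + y powr (c - 1))"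
      using e2 by (intro mult_left_mono) auto
    also have "\<dots> = \<omega> N * (R (N - 1) / L) + \<omega> N"
      using omeq[of N] e3 by (simp add: y_def algebra_simps)
    also have "\<omega> N * (R (N - 1) / L) \<le> \<omega> N * R (N - 1)"
    proof -
      have "R (N-1) / L \<le> R (N-1) / 1" by (rule divide_left_mono) (use R0 L2 in auto)
      then have "R (N-1) / L \<le> R (N-1)" by simp
      then show ?thesis using om0[of N] by (rule mult_left_mono)
    qed
    finally have "real N ^ 2 * (A (N - 1) powr c / y) \<le> \<omega> N * R (N - 1) + \<omega> N" by simp
    then show ?thesis using e1 by (simp add: y_def)
  qed
  have rN: "r N \<le> (1 / \<theta>) * ((1 + \<omega> N) * R (N - 1) + \<omega> N + c1 * \<iota> N)" if "N \<ge> n0" for N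
  proof -
    have "r N = A N / L ^ N" by (simp add: r_def)
    also have "\<dots> \<le> ((F N + c1) / \<theta>) / L ^ N"
      using H1[OF that] th0 Lp[of N] by (intro divide_right_mono) (auto simp: field_simps)
    also have "\<dots> = (1 / \<theta>) * (F N / L ^ N + c1 * (1 / L ^ N))"
    proof -
      have gen: "((u + v) / th) / w = (1 / th) * (u / w + v * (1 / w))" if "w \<noteq> 0" "th \<noteq> 0" for u v w th :: real
        using that by (simp add: field_simps)
      show ?thesis by (rule gen) (use th0 L2 in auto)
    qed
    also have "\<dots> \<le> (1 / \<theta>) * (\<omega> N * R (N - 1) + \<omega> N + (M + 1) * (S (N - 1) / L ^ N) + c1 * \<iota> N)"
      using FN[of N] that n0 th0 ioeq[of N] by (intro mult_left_mono) auto
    also have "(M + 1) * (S (N - 1) / L ^ N) \<le> R (N - 1)"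
    proof -
      have "(M + 1) * (S (N - 1) / L ^ N) = ((M + 1) / L) * R (N - 1)" using SR[of N] that n0 by simp
      also have "\<dots> \<le> 1 * R (N - 1)" using R0[of "N-1"] M0 by (intro mult_right_mono) (auto simp: L_def)
      finally show ?thesis by simp
    qed
    finally show ?thesis using th0 by (simp add: algebra_simps divide_right_mono)
  qed
  have rN2: "r N \<le> (1 / \<theta>) * (2 * R (N - 1) + \<omega> N + c1 * \<iota> N)" if "N \<ge> n0" for N
  proof -
    have "(1 + \<omega> N) * R (N - 1) \<le> 2 * R (N - 1)" using n3[of N] that n0 R0[of "N-1"]
      by (intro mult_right_mono) auto
    then have "(1 / \<theta>) * ((1 + \<omega> N) * R (N - 1) + \<omega> N + c1 * \<iota> N) \<le> (1 / \<theta>) * (2 * R (N - 1) + \<omega> N + c1 * \<iota> N)"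
      using th0 by (intro mult_left_mono) auto
    then show ?thesis using rN[OF that] by linarith
  qed
  have rN3: "r N \<le> (1 / \<theta>) * (2 * R (N - 1) + 1 + c1)" if "N \<ge> n0" for N
  proof -
    have "c1 * \<iota> N \<le> c1 * 1" using io1[of N] c10 by (intro mult_left_mono) auto
    then have "\<omega> N + c1 * \<iota> N \<le> 1 + c1" using n3[of N] that n0 by simp
    then have "(1 / \<theta>) * (2 * R (N - 1) + \<omega> N + c1 * \<iota> N) \<le> (1 / \<theta>) * (2 * R (N - 1) + 1 + c1)"
      using th0 by (intro mult_left_mono) auto
    then show ?thesis using rN2[OF that] by linarith
  qed
  have r0: "r n \<ge> 0" if "n \<ge> 1" for n using A0[OF that] Lp[of n] by (simp add: r_def)
  define lz :: nat where "lz = max 4 (nat \<lceil>16 / \<theta>^2\<rceil>)"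
  have l04: "lz \<ge> 4" by (simp add: lz_def)
  have l0t: "real lz \<ge> 16 / \<theta>^2"
  proof -
    have "16 / \<theta>^2 \<le> real (nat \<lceil>16 / \<theta>^2\<rceil>)" by (rule real_nat_ceiling_ge)
    also have "\<dots> \<le> real lz" by (simp add: lz_def)
    finally show ?thesis .
  qed
  define \<Lambda> where "\<Lambda> = \<bar>log 2 (\<delta> / (2 * Z))\<bar> + \<bar>log 2 (\<delta> / (2 * real lz))\<bar>"
  have Lam0: "\<Lambda> \<ge> 0" by (simp add: \<Lambda>_def)
  define J where "J N = ((2 / \<theta>) * A N) powr \<kappa>" for N
  have J0: "J N \<ge> 0" for N by (simp add: J_def)
  define big where "big N = (A N \<ge> F N + J N + \<Lambda>)" for N
  define m where "m N = (LEAST n. N \<le> n \<and> (2 / \<theta>) * A N \<le> A n)" for N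
  have mex: "\<exists>n. N \<le> n \<and> (2 / \<theta>) * A N \<le> A n" for N
  proof -
    obtain k where "\<And>n. n \<ge> k \<Longrightarrow> A n \<ge> (2/\<theta>) * A N"
      using Abig[of "(2/\<theta>) * A N"] by (auto simp: eventually_sequentially)
    then show ?thesis by (intro exI[of _ "max N k"]) auto
  qed
  have m1: "N \<le> m N \<and> (2 / \<theta>) * A N \<le> A (m N)" for N
    using LeastI_ex[OF mex[of N]] by (simp add: m_def)
  have m2: "A n < (2 / \<theta>) * A N" if "N \<le> n" "n < m N" for N n
  proof -
    have "\<not> (N \<le> n \<and> (2 / \<theta>) * A N \<le> A n)"
      by (rule not_less_Least) (use that in \<open>simp add: m_def\<close>)
    then show ?thesis using that(1) by simp
  qed
  have twoth: "2 / \<theta> > 1" using th0 th1 by (simp add: field_simps)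
  have mgt: "m N > N" if "N \<ge> n0" for N
  proof (rule ccontr)
    assume "\<not> m N > N"
    then have "m N = N" using m1[of N] by simp
    then have "(2 / \<theta>) * A N \<le> A N" using m1[of N] by simp
    moreover have "A N \<ge> 1" using n2[of N] that n0 by simp
    moreover have "1 * A N < (2 / \<theta>) * A N" using twoth \<open>A N \<ge> 1\<close> by (intro mult_strict_right_mono) auto
    ultimately show False by simp
  qed
  have bigl: "real (m N - N) > real lz" if "N \<ge> n0" "big N" for N
  proof -
    define l where "l = m N - N"
    have mN: "m N = N + l" using mgt[OF that(1)] by (simp add: l_def)
    have Nn2: "N \<ge> n2" using that n0 by simp
    have AN1: "A N \<ge> 1" using n2[OF Nn2] by simp
    have blk: "t (N + i) \<le> 2 powr (J N - A N)" if "i < l" for i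
    proof -
      let ?n = "N + i"
      have nn: "N \<le> ?n" "?n < m N" using that mN by auto
      have An: "A ?n < (2 / \<theta>) * A N" by (rule m2[OF nn])
      have an: "real (a N) \<le> real (a ?n)" using amono[of N ?n] Nn2 n2[OF Nn2] by simp
      have "t ?n \<le> real (b ?n) / real (a N)"
        unfolding t_def using an a1[of N] n2[OF Nn2] by (intro divide_left_mono) auto
      also have "real (b ?n) \<le> 2 powr (A ?n powr \<kappa>)" using n2[of ?n] Nn2 by simp
      also have "A ?n powr \<kappa> \<le> J N" unfolding J_def
        using An A0[of ?n] n2[OF Nn2] kap by (intro powr_mono2) auto
      finally have "t ?n \<le> 2 powr (J N) / real (a N)"
        using a1[of N] n2[OF Nn2] by (simp add: divide_right_mono)
      also have "\<dots> = 2 powr (J N - A N)" using aA[of N] n2[OF Nn2] by (simp add: powr_diff)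
      finally show ?thesis .
    qed
    have sblk: "(\<Sum>i<l. t (N + i)) \<le> real l * 2 powr (J N - A N)"
      using sum_bounded_above[of "{..<l}" "\<lambda>i. t (N + i)" "2 powr (J N - A N)"] blk by simp
    have tail: "T (m N) \<le> 2 powr (- 2 * A N) * Z"
    proof -
      have "T (m N) \<le> 2 powr (- \<theta> * A (m N)) * Z" using Tbd1[of "m N"] m1[of N] Nn2 by simp
      also have "\<dots> \<le> 2 powr (- 2 * A N) * Z"
      proof -
        have "\<theta> * ((2 / \<theta>) * A N) \<le> \<theta> * A (m N)" using m1[of N] th0 by (intro mult_left_mono) auto
        then have "- \<theta> * A (m N) \<le> - 2 * A N" using th0 by simp
        then show ?thesis using Z1 by (intro mult_right_mono) auto
      qed
      finally show ?thesis .
    qed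
    have "\<delta> < 2 powr F N * T N" using H[of N] that n0 by simp
    also have "T N \<le> real l * 2 powr (J N - A N) + 2 powr (- 2 * A N) * Z"
      using Tsplit[of N l] sblk tail mN by simp
    finally have "\<delta> < 2 powr F N * (real l * 2 powr (J N - A N)) + 2 powr F N * (2 powr (- 2 * A N) * Z)"
      by (simp add: distrib_left mult_left_mono)
    also have "2 powr F N * (real l * 2 powr (J N - A N)) = real l * 2 powr (F N + J N - A N)"
      by (simp add: powr_add[symmetric] powr_diff)
    also have "2 powr F N * (2 powr (- 2 * A N) * Z) = 2 powr (F N - 2 * A N) * Z"
      by (simp add: powr_add[symmetric] powr_diff powr_minus field_simps)
    also have "2 powr (F N - 2 * A N) * Z \<le> \<delta> / 2"
    proof -
      have "F N - 2 * A N \<le> log 2 (\<delta> / (2 * Z))"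
        using that(2) AN1 J0[of N] unfolding big_def \<Lambda>_def by linarith
      then have "2 powr (F N - 2 * A N) \<le> 2 powr log 2 (\<delta> / (2 * Z))" by simp
      also have "\<dots> = \<delta> / (2 * Z)" using dpos Z1 by simp
      finally show ?thesis using Z1 by (simp add: field_simps)
    qed
    finally have d2: "\<delta> / 2 < real l * 2 powr (F N + J N - A N)" by simp
    have "F N + J N - A N \<le> log 2 (\<delta> / (2 * real lz))"
      using that(2) unfolding big_def \<Lambda>_def by linarith
    then have "2 powr (F N + J N - A N) \<le> 2 powr log 2 (\<delta> / (2 * real lz))" by simp
    also have "\<dots> = \<delta> / (2 * real lz)" using dpos l04 by simp
    finally have "real l * 2 powr (F N + J N - A N) \<le> real l * (\<delta> / (2 * real lz))"
      by (intro mult_left_mono) auto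
    with d2 have "\<delta> / 2 < real l * (\<delta> / (2 * real lz))" by (rule order.strict_trans2)
    then have "\<delta> * real lz < real l * \<delta>" using l04 dpos by (simp add: field_simps)
    then show ?thesis using dpos by (simp add: l_def mult.commute)
  qed
  have ell: "8 * real l * L \<le> \<theta>^2 * L ^ l" if "real l > real lz" for l
  proof (rule ell_bound[OF L2 th0])
    show "l \<ge> 4" using that l04 by simp
    show "real l \<ge> 16 / \<theta>^2" using that l0t by simp
  qed
  have bigR: "R (m N - 1) \<le> R (N - 1) + (\<omega> N + c1 * \<iota> N) / 4" if "N \<ge> n0" "big N" for N
  proof -
    define l where "l = m N - N"
    have lgt: "real l > real lz" using bigl[OF that] by (simp add: l_def)
    have N1: "N \<ge> 1" using that n0 by simp
    have mN: "m N - 1 = (N - 1) + l" using mgt[OF that(1)] N1 by (simp add: l_def)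
    have sA: "(\<Sum>i<l. A (N - 1 + 1 + i)) \<le> real l * ((2 / \<theta>) * A N)"
    proof -
      have "A (N - 1 + 1 + i) \<le> (2 / \<theta>) * A N" if "i < l" for i
      proof -
        have "N + i < m N" using that by (simp add: l_def)
        then have "A (N + i) < (2 / \<theta>) * A N" using m2[of N "N + i"] by simp
        then show ?thesis using N1 by simp
      qed
      then show ?thesis using sum_bounded_above[of "{..<l}" "\<lambda>i. A (N - 1 + 1 + i)" "(2 / \<theta>) * A N"] by simp
    qed
    have Sm: "S (m N - 1) \<le> S (N - 1) + real l * ((2 / \<theta>) * A N)"
      using Sshift[of "N - 1" l] sA mN by simp
    have Lm: "L ^ (m N - 1) = L ^ (N - 1) * L ^ l" using mN by (simp add: power_add)
    have NS: "N = Suc (N - 1)" using N1 by simp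
    have LN: "L ^ N = L ^ (N - 1) * L" by (subst NS) (simp add: power_Suc2)
    have "R (m N - 1) \<le> (S (N - 1) + real l * ((2 / \<theta>) * A N)) / (L ^ (N - 1) * L ^ l)"
      unfolding R_def Lm using Sm Lp[of "N-1"] Lp[of l] by (intro divide_right_mono) auto
    also have "\<dots> = R (N - 1) * (1 / L ^ l) + (2 / \<theta>) * ((real l * L) / L ^ l) * r N"
      unfolding R_def r_def LN using Lp[of "N-1"] Lp[of l] L2 by (simp add: field_simps)
    also have "\<dots> \<le> R (N - 1) * (1 / 2) + (2 / \<theta>) * (\<theta>^2 / 8) * ((1 / \<theta>) * (2 * R (N - 1) + \<omega> N + c1 * \<iota> N))"
    proof (intro add_mono mult_left_mono mult_mono)
      show "1 / L ^ l \<le> 1 / 2"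
      proof -
        have "L ^ 1 \<le> L ^ l" using lgt l04 L2 by (intro power_increasing) auto
        then show ?thesis using L2 by (simp add: field_simps)
      qed
      show "real l * L / L ^ l \<le> \<theta>^2 / 8" using ell[OF lgt] Lp[of l] by (simp add: field_simps)
      show "r N \<le> (1 / \<theta>) * (2 * R (N - 1) + \<omega> N + c1 * \<iota> N)" by (rule rN2[OF that(1)])
    qed (use R0 th0 r0[OF N1] Lp[of l] L2 in auto)
    also have "\<dots> = R (N - 1) + (\<omega> N + c1 * \<iota> N) / 4" using th0 by (simp add: field_simps power2_eq_square)
    finally show ?thesis .
  qed
  have bigr: "r n \<le> (4 / \<theta>^2) * R (N - 1) + (2 / \<theta>^2) * (1 + c1)"
    if "N \<ge> n0" "big N" "N \<le> n" "n < m N" for N n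
  proof -
    have N1: "N \<ge> 1" using that n0 by simp
    have "r n = A n / L ^ n" by (simp add: r_def)
    also have "\<dots> \<le> ((2 / \<theta>) * A N) / L ^ N"
    proof (rule frac_le)
      show "0 \<le> (2 / \<theta>) * A N" using A0[OF N1] th0 by simp
      show "A n \<le> (2 / \<theta>) * A N" using m2[OF that(3,4)] by simp
      show "0 < L ^ N" by (rule Lp)
      show "L ^ N \<le> L ^ n" using that(3) L2 by (intro power_increasing) auto
    qed
    also have "\<dots> = (2 / \<theta>) * r N" by (simp add: r_def)
    also have "\<dots> \<le> (2 / \<theta>) * ((1 / \<theta>) * (2 * R (N - 1) + 1 + c1))"
      using rN3[OF that(1)] th0 by (intro mult_left_mono) auto
    also have "\<dots> = (4 / \<theta>^2) * R (N - 1) + (2 / \<theta>^2) * (1 + c1)"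
      using th0 by (simp add: field_simps power2_eq_square)
    finally show ?thesis .
  qed
  define \<beta> where "\<beta> N = \<omega> N + (4 / \<theta>^2) * \<psi> N" for N
  define \<gamma> where "\<gamma> N = \<omega> N + \<psi> N * (1 + (2 / \<theta>^2) * (1 + c1)) + \<Lambda> * \<iota> N + (\<omega> N + c1 * \<iota> N) / 4" for N
  have small: "R N \<le> (1 + \<beta> N) * R (N - 1) + \<gamma> N" if "N \<ge> n0" "\<not> big N" for N
  proof -
    have N1: "N \<ge> 1" using that n0 by simp
    have NS: "N = Suc (N - 1)" using N1 by simp
    have SN: "S N = S (N - 1) + A N" using SSuc[of "N-1"] NS by simp
    have AN: "A N \<le> F N + J N + \<Lambda>" using that(2) by (simp add: big_def)
    define y where "y = (L ^ N :: real)"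
    have y0: "y > 0" by (simp add: y_def Lp)
    have "R N = S (N - 1) / y + A N / y" by (simp add: R_def SN y_def add_divide_distrib)
    also have "A N / y \<le> F N / y + J N / y + \<Lambda> / y"
      using AN y0 by (simp add: divide_right_mono flip: add_divide_distrib)
    also have "F N / y \<le> \<omega> N * R (N - 1) + \<omega> N + (M + 1) * (S (N - 1) / y)"
      using FN[of N] that n0 by (simp add: y_def)
    also have "J N / y \<le> (2 / \<theta>) * r N * \<psi> N + \<psi> N"
    proof -
      have "J N \<le> ((2 / \<theta>) * A N) * y powr (\<kappa> - 1) + y powr \<kappa>"
        unfolding J_def using A0[OF N1] th0 y0 kap by (intro sublin) auto
      then have "J N / y \<le> (((2 / \<theta>) * A N) * y powr (\<kappa> - 1) + y powr \<kappa>) / y"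
        using y0 by (simp add: divide_right_mono)
      also have "\<dots> = (2 / \<theta>) * (A N / y) * y powr (\<kappa> - 1) + y powr \<kappa> / y"
        by (simp add: add_divide_distrib)
      also have "y powr \<kappa> / y = \<psi> N" using ydiv[of N \<kappa>] psieq[of N] by (simp add: y_def)
      also have "y powr (\<kappa> - 1) = \<psi> N" using psieq[of N] by (simp add: y_def)
      finally show ?thesis by (simp add: r_def y_def)
    qed
    also have "\<Lambda> / y = \<Lambda> * \<iota> N"
    proof -
      have "\<Lambda> / y = \<Lambda> * (1 / y)" by simp
      then show ?thesis using ioeq[of N] by (simp only: y_def)
    qed
    finally have R1: "R N \<le> S (N - 1) / y + (M + 1) * (S (N - 1) / y) + \<omega> N * R (N - 1) + \<omega> N
        + (2 / \<theta>) * r N * \<psi> N + \<psi> N + \<Lambda> * \<iota> N" by simp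
    have e1: "S (N - 1) / y + (M + 1) * (S (N - 1) / y) = R (N - 1)"
      using SR[OF N1] L2 by (simp add: y_def L_def field_simps)
    have e2: "(2 / \<theta>) * r N * \<psi> N \<le> (2 / \<theta>) * ((1 / \<theta>) * (2 * R (N - 1) + 1 + c1)) * \<psi> N"
      using rN3[OF that(1)] th0 psi0[of N] by (intro mult_right_mono mult_left_mono) auto
    have e3: "(2 / \<theta>) * ((1 / \<theta>) * (2 * R (N - 1) + 1 + c1)) * \<psi> N
        = (4 / \<theta>^2) * \<psi> N * R (N - 1) + \<psi> N * ((2 / \<theta>^2) * (1 + c1))"
      using th0 by (simp add: field_simps power2_eq_square)
    have e4: "(\<omega> N + c1 * \<iota> N) / 4 \<ge> 0" using om0[of N] c10 io0[of N] by simp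
    have R2: "R N \<le> R (N - 1) + \<omega> N * R (N - 1) + \<omega> N + (4 / \<theta>^2) * \<psi> N * R (N - 1)
        + \<psi> N * ((2 / \<theta>^2) * (1 + c1)) + \<psi> N + \<Lambda> * \<iota> N"
      using R1 e1 e2 e3 by linarith
    have eq: "(1 + \<beta> N) * R (N - 1) + \<gamma> N = R (N - 1) + \<omega> N * R (N - 1) + \<omega> N + (4 / \<theta>^2) * \<psi> N * R (N - 1)
        + \<psi> N * ((2 / \<theta>^2) * (1 + c1)) + \<psi> N + \<Lambda> * \<iota> N + (\<omega> N + c1 * \<iota> N) / 4"
      unfolding \<beta>_def \<gamma>_def by (simp add: algebra_simps)
    show ?thesis using R2 eq e4 by linarith
  qed
  have b0: "\<beta> n \<ge> 0" for n using om0[of n] psi0[of n] by (simp add: \<beta>_def)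
  have g0: "\<gamma> n \<ge> 0" for n
    using om0[of n] psi0[of n] io0[of n] c10 Lam0 th0 by (simp add: \<gamma>_def)
  have sb: "summable \<beta>" unfolding \<beta>_def
    by (intro summable_add sum_om summable_mult sum_psi)
  have sg: "summable \<gamma>" unfolding \<gamma>_def
    by (intro summable_add summable_divide sum_om summable_mult2 summable_mult sum_psi sum_io)
  obtain B where B: "\<forall>n \<ge> n0. r n \<le> B"
  proof -
    have "\<exists>B. \<forall>n \<ge> n0. r n \<le> B"
    proof (rule core_potential[where R = R and r = r and \<beta> = \<beta> and \<gamma> = \<gamma> and m = m and big = big
          and nst = n0 and C = "4 / \<theta>^2" and D = "(2 / \<theta>^2) * (1 + c1)"])
      show "\<And>n. R n \<ge> 0" by (rule R0)
      show "\<And>n. \<beta> n \<ge> 0" by (rule b0)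
      show "\<And>n. \<gamma> n \<ge> 0" by (rule g0)
      show "summable \<beta>" by (rule sb)
      show "summable \<gamma>" by (rule sg)
      show "4 / \<theta>^2 \<ge> 0" by simp
      show "\<And>n. n \<ge> n0 \<Longrightarrow> r n \<le> R n" using rR n0 by simp
      show "\<And>N. N > n0 \<Longrightarrow> \<not> big N \<Longrightarrow> R N \<le> (1 + \<beta> N) * R (N - 1) + \<gamma> N"
        using small by simp
      show "\<And>N. N > n0 \<Longrightarrow> big N \<Longrightarrow> m N \<ge> N + 2"
      proof -
        fix N assume "N > n0" "big N"
        then have "real (m N - N) > real lz" using bigl by simp
        then show "m N \<ge> N + 2" using l04 by linarith
      qed
      show "\<And>N. N > n0 \<Longrightarrow> big N \<Longrightarrow> R (m N - 1) \<le> R (N - 1) + \<gamma> N"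
      proof -
        fix N assume N: "N > n0" "big N"
        have "R (m N - 1) \<le> R (N - 1) + (\<omega> N + c1 * \<iota> N) / 4" using bigR N by simp
        moreover have "(\<omega> N + c1 * \<iota> N) / 4 \<le> \<gamma> N"
          using om0[of N] psi0[of N] io0[of N] c10 Lam0 th0 by (simp add: \<gamma>_def)
        ultimately show "R (m N - 1) \<le> R (N - 1) + \<gamma> N" by linarith
      qed
      show "\<And>N n. N > n0 \<Longrightarrow> big N \<Longrightarrow> N \<le> n \<Longrightarrow> n < m N \<Longrightarrow> r n \<le> 4 / \<theta>^2 * R (N - 1) + 2 / \<theta>^2 * (1 + c1)"
        using bigr by simp
    qed
    then show ?thesis using that by blast
  qed
  have ev: "\<forall>\<^sub>F n in sequentially. ereal (real (a n) powr ((M + 2) powr (- real n))) \<le> ereal (2 powr B)"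
    using eventually_ge_at_top[of n0]
  proof eventually_elim
    case (elim n)
    have n1: "n \<ge> 1" using elim n0 by simp
    have "(M + 2) powr (- real n) = 1 / L ^ n"
      using L2 by (simp add: L_def powr_minus powr_realpow divide_inverse)
    then have "real (a n) powr ((M + 2) powr (- real n)) = 2 powr (A n * (1 / L ^ n))"
      using aA[OF n1] by (simp add: powr_powr)
    also have "A n * (1 / L ^ n) = r n" by (simp add: r_def)
    also have "2 powr r n \<le> 2 powr B" using B elim by simp
    finally show ?case by simp
  qed
  have "limsup (\<lambda>n. ereal (real (a n) powr ((M + 2) powr (- real n)))) \<le> ereal (2 powr B)"
    by (rule Limsup_bounded[OF ev])
  then show False using lsup by simp
qed
end
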